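(* Let $\alpha\in(0,1)$, $r>0$ and $\lambda=r\big(\cos\frac{\pi\alpha}{2}+i\sin\frac{\pi\alpha}{2}\big)$. Then for every $x_0\in\mathbb{C}$ the solution of \[ {}^{C}D^\alpha_{0+}x(t)=\lambda x(t)+\exp(i r^{1/\alpha}t),\qquad x(0)=x_0, \] namely $\varphi(t;0,x_0)=E_\alpha(\lambda t^\alpha)x_0+\int_0^t(t-\tau)^{\alpha-1}E_{\alpha,\alpha}(\lambda(t-\tau)^\alpha)\exp(ir^{1/\alpha}\tau)\,d\tau$, is unbounded on $\mathbb{R}_{\ge0}$.
   Context: For $\alpha\in(0,1)$ the Caputo derivative is ${}^{C}D^\alpha_{0+}x(t)=\frac{1}{\Gamma(1-\alpha)}\int_0^t(t-\tau)^{-\alpha}x'(\tau)\,d\tau$. The Mittag-Leffler functions are $E_{\alpha,\beta}(z)=\sum_{k\ge0}z^k/\Gamma(\alpha k+\beta)$, $E_\alpha=E_{\alpha,1}$. *)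

theory Defs
  imports "HOL-Analysis.Analysis"
begin

definition mittag_leffler :: "real \<Rightarrow> real \<Rightarrow> complex \<Rightarrow> complex" where
  "mittag_leffler a b z = (\<Sum>k. z ^ k / Gamma (complex_of_real (a * real k + b)))"

definition mittag_leffler1 :: "real \<Rightarrow> complex \<Rightarrow> complex" where
  "mittag_leffler1 a z = mittag_leffler a 1 z"

definition frac_sol :: "real \<Rightarrow> complex \<Rightarrow> real \<Rightarrow> complex \<Rightarrow> real \<Rightarrow> complex" where
  "frac_sol a lam w x0 t =
     mittag_leffler1 a (lam * complex_of_real (t powr a)) * x0
     + integral {0..t} (\<lambda>s. complex_of_real ((t - s) powr (a - 1))
          * mittag_leffler a a (lam * complex_of_real ((t - s) powr a))
          * exp (\<i> * complex_of_real (w * s)))"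

end

theory Submission
  imports Defs "HOL-Complex_Analysis.Complex_Analysis"
begin

lemma gamma_lower:
  fixes x T :: real
  assumes x: "x > 0" and T: "T > 0"
  shows "T powr x * exp (-2*T) / 2 \<le> Gamma x"
proof -
  define f where "f = (\<lambda>t::real. t powr (x - 1) / exp t)"
  have G: "(f has_integral Gamma x) {0..}" unfolding f_def using Gamma_integral_real[OF x] .
  have fi: "f integrable_on {T..2*T}"
    unfolding f_def using T by (intro integrable_continuous_interval continuous_intros) auto
  have "integral {T..2*T} f \<le> integral {0..} f"
    using G T by (intro integral_subset_le fi) (auto simp: f_def has_integral_integrable)
  also have "\<dots> = Gamma x" using G by blast
  finally have I: "integral {T..2*T} f \<le> Gamma x" .
  have lb: "T powr (x - 1) * exp (-2*T) / 2 \<le> f t" if t: "t \<in> {T..2*T}" for t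
  proof -
    have tp: "t > 0" using t T by auto
    have p: "T powr (x - 1) / 2 \<le> t powr (x - 1)"
    proof (cases "x \<ge> 1")
      case True
      then have "T powr (x - 1) \<le> t powr (x - 1)" using t T by (intro powr_mono2) auto
      moreover have "T powr (x-1) \<ge> 0" by simp
      ultimately show ?thesis by linarith
    next
      case False
      have "(2*T) powr (x - 1) \<le> t powr (x - 1)" using t T False by (intro powr_mono2') auto
      moreover have "(2*T) powr (x - 1) = 2 powr (x-1) * T powr (x-1)"
        using T by (simp add: powr_mult)
      moreover have "2 powr (x - 1) \<ge> 2 powr (-1)" using x by (intro powr_mono) auto
      moreover have "(2::real) powr (-1) = 1/2" by (simp add: powr_minus)
      ultimately have "(1/2) * T powr (x-1) \<le> 2 powr (x - 1) * T powr (x-1)"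
        by (intro mult_right_mono) auto
      then show ?thesis using \<open>(2*T) powr (x - 1) \<le> t powr (x - 1)\<close> \<open>(2*T) powr (x - 1) = 2 powr (x-1) * T powr (x-1)\<close> by simp
    qed
    have e: "exp (-2*T) \<le> 1 / exp t"
    proof -
      have "exp (-2*T) \<le> exp (-t)" using t by simp
      then show ?thesis by (simp add: exp_minus field_simps)
    qed
    have "T powr (x - 1) * exp (-2*T) / 2 = (T powr (x - 1) / 2) * exp (-2*T)" by simp
    also have "\<dots> \<le> t powr (x - 1) * (1 / exp t)"
      using p e by (intro mult_mono) auto
    finally show ?thesis by (simp add: f_def)
  qed
  have "integral {T..2*T} (\<lambda>_. T powr (x - 1) * exp (-2*T) / 2) \<le> integral {T..2*T} f"
    using lb fi by (intro integral_le) auto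
  moreover have "integral {T..2*T} (\<lambda>_. T powr (x - 1) * exp (-2*T) / 2) = T * (T powr (x - 1) * exp (-2*T) / 2)"
    using T by simp
  moreover have "T * T powr (x - 1) = T powr x"
    using T by (simp add: powr_diff)
  ultimately show ?thesis using I by (simp add: mult.assoc[symmetric])
qed

lemma ml_summable_real:
  fixes a b R :: real
  assumes a: "a > 0" and b: "b > 0" and R: "R \<ge> 0"
  shows "summable (\<lambda>k. R ^ k / Gamma (a * real k + b))"
proof -
  define T where "T = (2*R + 1) powr (1/a)"
  have T: "T > 0" using R by (simp add: T_def)
  have Ta: "T powr a = 2*R+1" using R a by (simp add: T_def powr_powr)
  define C where "C = 2 * exp (2*T) / T powr b"
  have bnd: "norm (R ^ k / Gamma (a * real k + b)) \<le> C * (1/2)^k" for k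
  proof -
    have xk: "a * real k + b > 0" using a b by (simp add: add_nonneg_pos)
    have g: "T powr (a * real k + b) * exp (-2*T) / 2 \<le> Gamma (a * real k + b)"
      by (rule gamma_lower[OF xk T])
    have gp: "Gamma (a * real k + b) > 0" using xk by (simp add: Gamma_real_pos)
    have "T powr (a * real k) = (T powr a) powr real k" by (simp add: powr_powr)
    also have "\<dots> = (2*R+1)^k" using R by (simp add: Ta powr_realpow)
    finally have tp: "T powr (a * real k + b) = (2*R+1)^k * T powr b"
      by (simp add: powr_add)
    have "norm (R ^ k / Gamma (a * real k + b)) = R^k / Gamma (a * real k + b)"
      using R gp by simp
    also have "\<dots> \<le> R^k / (T powr (a * real k + b) * exp (-2*T) / 2)"
      using g R gp T by (intro divide_left_mono) (auto intro!: mult_pos_pos)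
    also have "\<dots> = C * (R / (2*R+1))^k"
      using T R by (simp only: tp C_def) (simp add: field_simps exp_minus power_divide)
    also have "\<dots> \<le> C * (1/2)^k"
      using R by (intro mult_left_mono power_mono) (auto simp: C_def field_simps)
    finally show ?thesis .
  qed
  show ?thesis
    by (rule summable_comparison_test[OF _ summable_mult[OF complete_algebra_summable_geometric]])
       (use bnd in auto)
qed

lemma laplace_powr:
  fixes \<beta> p :: real
  assumes b: "\<beta> > 0" and p: "p > 0"
  shows "integrable lborel (\<lambda>t. indicator {0..} t * (t powr (\<beta>-1) * exp(-p*t)))"
    and "(LBINT t. indicator {0..} t * (t powr (\<beta>-1) * exp(-p*t))) = Gamma \<beta> / p powr \<beta>"
proof -
  define h where "h = (\<lambda>t::real. indicator {0..} t * (t powr (\<beta>-1) * exp(-p*t)))"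
  have hm: "h \<in> borel_measurable borel" unfolding h_def by measurable
  have hnn: "h t \<ge> 0" for t by (simp add: h_def indicator_def)
  have "ennreal (Gamma \<beta>) = (\<integral>\<^sup>+ u. ennreal (indicator {0..} u * u powr (\<beta> - 1) / exp u) \<partial>lborel)"
    using Gamma_conv_nn_integral_real[OF b] .
  also have "\<dots> = ennreal p * (\<integral>\<^sup>+ x. ennreal (indicator {0..} (0 + p*x) * (0 + p*x) powr (\<beta> - 1) / exp (0 + p*x)) \<partial>lborel)"
  proof -
    have "(\<integral>\<^sup>+ u. ennreal (indicator {0..} u * u powr (\<beta> - 1) / exp u) \<partial>lborel) = ennreal \<bar>p\<bar> * (\<integral>\<^sup>+ x. (\<lambda>u. ennreal (indicator {0..} u * u powr (\<beta> - 1) / exp u)) (0 + p*x) \<partial>lborel)"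
      by (rule nn_integral_real_affine) (use p in auto)
    then show ?thesis using p by simp
  qed
  also have "(\<lambda>x. ennreal (indicator {0..} (0 + p*x) * (0 + p*x) powr (\<beta> - 1) / exp (0 + p*x)))
      = (\<lambda>x. ennreal (p powr (\<beta> - 1)) * ennreal (h x))"
  proof
    fix x :: real
    show "ennreal (indicator {0..} (0 + p*x) * (0 + p*x) powr (\<beta> - 1) / exp (0 + p*x)) = ennreal (p powr (\<beta> - 1)) * ennreal (h x)"
    proof (cases "x \<ge> 0")
      case True
      then show ?thesis using p
        by (simp add: h_def powr_mult ennreal_mult'[symmetric] exp_minus field_simps)
    next
      case False
      then have "\<not> 0 \<le> p * x" using p by (simp add: mult_le_0_iff not_le zero_le_mult_iff)
      then show ?thesis using False by (simp add: h_def)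
    qed
  qed
  also have "(\<integral>\<^sup>+ x. ennreal (p powr (\<beta> - 1)) * ennreal (h x) \<partial>lborel) = ennreal (p powr (\<beta> - 1)) * (\<integral>\<^sup>+ x. ennreal (h x) \<partial>lborel)"
    using hm by (intro nn_integral_cmult) auto
  finally have E: "ennreal (Gamma \<beta>) = ennreal p * ennreal (p powr (\<beta> - 1)) * (\<integral>\<^sup>+ x. ennreal (h x) \<partial>lborel)"
    by (simp add: mult.assoc)
  have pp: "ennreal p * ennreal (p powr (\<beta> - 1)) = ennreal (p powr \<beta>)"
    using p by (simp add: ennreal_mult'[symmetric] powr_diff)
  have "(\<integral>\<^sup>+ x. ennreal (h x) \<partial>lborel) = ennreal (Gamma \<beta> / p powr \<beta>)"
  proof -
    have ne: "ennreal (p powr \<beta>) \<noteq> 0" "ennreal (p powr \<beta>) \<noteq> top" using p by auto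
    have "ennreal (Gamma \<beta> / p powr \<beta>) = ennreal (Gamma \<beta>) / ennreal (p powr \<beta>)"
      using p b by (simp add: divide_ennreal)
    also have "\<dots> = (\<integral>\<^sup>+ x. ennreal (h x) \<partial>lborel)"
    proof -
      have "ennreal (Gamma \<beta>) = ennreal (p powr \<beta>) * (\<integral>\<^sup>+ x. ennreal (h x) \<partial>lborel)"
        using E pp by (simp add: mult.assoc)
      then show ?thesis using ne by (metis mult.commute mult_divide_eq_ennreal)
    qed
    finally show ?thesis by simp
  qed
  then have "integrable lborel h \<and> integral\<^sup>L lborel h = Gamma \<beta> / p powr \<beta>"
    using b p hm hnn by (subst nn_integral_eq_integrable[symmetric]) (auto simp: Gamma_real_pos less_imp_le)
  then show "integrable lborel (\<lambda>t. indicator {0..} t * (t powr (\<beta>-1) * exp(-p*t)))"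
    and "(LBINT t. indicator {0..} t * (t powr (\<beta>-1) * exp(-p*t))) = Gamma \<beta> / p powr \<beta>"
    unfolding h_def by auto
qed

lemma laplace_series:
  fixes c :: "nat \<Rightarrow> complex" and \<beta> :: "nat \<Rightarrow> real" and p :: real and F :: "real \<Rightarrow> complex"
  assumes b: "\<And>k. \<beta> k > 0" and p: "p > 0"
    and S: "summable (\<lambda>k. norm (c k) * (Gamma (\<beta> k) / p powr \<beta> k))"
    and F: "\<And>t. t > 0 \<Longrightarrow> (\<lambda>k. c k * of_real (t powr (\<beta> k - 1))) sums F t"
    and Fa: "\<And>t. t > 0 \<Longrightarrow> summable (\<lambda>k. norm (c k) * t powr (\<beta> k - 1))"
    and Fm: "F \<in> borel_measurable borel"
  shows "integrable lborel (\<lambda>t. indicator {0..} t *\<^sub>R (F t * of_real (exp (-p*t))))"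
    and "(LINT t|lborel. indicator {0..} t *\<^sub>R (F t * of_real (exp (-p*t)))) = (\<Sum>k. c k * of_real (Gamma (\<beta> k) / p powr \<beta> k))"
proof -
  define f where "f = (\<lambda>k t. c k * of_real (indicator {0..} t * (t powr (\<beta> k - 1) * exp (-p*t))))"
  have fi: "integrable lborel (f k)" for k
    unfolding f_def by (intro integrable_mult_right integrable_of_real laplace_powr b p)
  have fI: "integral\<^sup>L lborel (f k) = c k * of_real (Gamma (\<beta> k) / p powr \<beta> k)" for k
    unfolding f_def
    by (subst integral_mult_right_zero, subst integral_of_real[OF laplace_powr(1)[OF b p]])
       (simp only: laplace_powr(2)[OF b p])
  have fnI: "(LINT t|lborel. norm (f k t)) = norm (c k) * (Gamma (\<beta> k) / p powr \<beta> k)" for k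
  proof -
    have "(\<lambda>t. norm (f k t)) = (\<lambda>t. norm (c k) * (indicator {0..} t * (t powr (\<beta> k - 1) * exp (-p*t))))"
      by (auto simp: f_def norm_mult indicator_def)
    then show ?thesis using laplace_powr[OF b p] by simp
  qed
  have AEs: "AE t in lborel. summable (\<lambda>k. norm (f k t))"
    using AE_lborel_singleton[of 0]
  proof eventually_elim
    case (elim t)
    show ?case
    proof (cases "t > 0")
      case True
      have "summable (\<lambda>k. (norm (c k) * t powr (\<beta> k - 1)) * exp (-p*t))"
        by (intro summable_mult2 Fa True)
      then show ?thesis using True by (simp add: f_def norm_mult mult.assoc)
    next
      case False
      then have "t < 0" using elim by auto
      then show ?thesis by (simp add: f_def)
    qed
  qed
  have sumI: "summable (\<lambda>k. LINT t|lborel. norm (f k t))"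
    unfolding fnI by (rule S)
  note I = integrable_suminf[OF fi AEs sumI] integral_suminf[OF fi AEs sumI]
  have eq: "AE t in lborel. (\<Sum>k. f k t) = indicator {0..} t *\<^sub>R (F t * of_real (exp (-p*t)))"
    using AE_lborel_singleton[of 0]
  proof eventually_elim
    case (elim t)
    show ?case
    proof (cases "t > 0")
      case True
      have "(\<lambda>k. c k * of_real (t powr (\<beta> k - 1)) * of_real (exp (-p*t))) sums (F t * of_real (exp (-p*t)))"
        by (intro sums_mult2 F True)
      then have "(\<lambda>k. f k t) sums (F t * of_real (exp (-p*t)))"
        using True by (simp add: f_def mult.assoc)
      then show ?thesis using True by (simp add: sums_iff)
    next
      case False
      then have "t < 0" using elim by auto
      then show ?thesis by (simp add: f_def)
    qed
  qed
  have meas: "(\<lambda>t. indicator {0..} t *\<^sub>R (F t * of_real (exp (-p*t)))) \<in> borel_measurable lborel"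
    using Fm by measurable
  show "integrable lborel (\<lambda>t. indicator {0..} t *\<^sub>R (F t * of_real (exp (-p*t))))"
    using integrable_cong_AE_imp[OF I(1) meas eq] .
  have "(LINT t|lborel. indicator {0..} t *\<^sub>R (F t * of_real (exp (-p*t)))) = (LINT t|lborel. (\<Sum>k. f k t))"
    using eq I(1) by (intro integral_cong_AE meas borel_measurable_integrable) (auto simp: eq_commute)
  also have "\<dots> = (\<Sum>k. c k * of_real (Gamma (\<beta> k) / p powr \<beta> k))"
    using I(2) fI by simp
  finally show "(LINT t|lborel. indicator {0..} t *\<^sub>R (F t * of_real (exp (-p*t)))) = (\<Sum>k. c k * of_real (Gamma (\<beta> k) / p powr \<beta> k))" .
qed

lemma ml_term_norm:
  assumes "a > 0" "b > 0"
  shows "norm (z ^ k / Gamma (complex_of_real (a * real k + b))) = norm z ^ k / Gamma (a * real k + b)"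
proof -
  have "Gamma (a * real k + b) > 0" using assms by (intro Gamma_real_pos) (simp add: add_nonneg_pos)
  then show ?thesis by (simp only: Gamma_complex_of_real norm_divide norm_power norm_of_real abs_of_pos)
qed

lemma ml_summable_norm:
  assumes "a > 0" "b > 0"
  shows "summable (\<lambda>k. norm (z ^ k / Gamma (complex_of_real (a * real k + b))))"
  by (subst ml_term_norm[OF assms]) (rule ml_summable_real[OF assms norm_ge_zero])

lemma ml_sums:
  assumes "a > 0" "b > 0"
  shows "(\<lambda>k. z ^ k / Gamma (complex_of_real (a * real k + b))) sums mittag_leffler a b z"
  unfolding mittag_leffler_def using summable_norm_cancel[OF ml_summable_norm[OF assms]]
  by (simp add: summable_sums)

lemma ml_isCont:
  assumes "a > 0" "b > 0"
  shows "isCont (mittag_leffler a b) z"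
proof -
  have e: "mittag_leffler a b = (\<lambda>z. \<Sum>k. (1 / Gamma (complex_of_real (a * real k + b))) * z ^ k)"
    by (simp add: mittag_leffler_def fun_eq_iff)
  show ?thesis unfolding e
    by (rule isCont_powser_converges_everywhere)
       (use summable_norm_cancel[OF ml_summable_norm[OF assms]] in simp)
qed

lemma ml_measurable:
  assumes "a > 0" "b > 0"
  shows "mittag_leffler a b \<in> borel_measurable borel"
  by (intro borel_measurable_continuous_onI continuous_at_imp_continuous_on ml_isCont assms ballI)

lemma powr_ak: "t > 0 \<Longrightarrow> t powr (a * real k) = (t powr a) ^ k"
  by (simp add: powr_powr[symmetric] powr_realpow)

lemma Gamma_pos_ak: "a > 0 \<Longrightarrow> b > 0 \<Longrightarrow> Gamma (a * real k + b) > 0"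
  by (intro Gamma_real_pos) (simp add: add_nonneg_pos)

lemma laplace_E1:
  fixes a p :: real and lam :: complex
  assumes a: "0 < a" and p: "p > 0" and pl: "norm lam < p powr a"
  shows "integrable lborel (\<lambda>t. indicator {0..} t *\<^sub>R (mittag_leffler1 a (lam * of_real (t powr a)) * of_real (exp (-p*t))))"
    and "(LINT t|lborel. indicator {0..} t *\<^sub>R (mittag_leffler1 a (lam * of_real (t powr a)) * of_real (exp (-p*t))))
         = 1 / (of_real p * (1 - lam / of_real (p powr a)))"
proof -
  define c where "c = (\<lambda>k. lam ^ k / of_real (Gamma (a * real k + 1)))"
  define \<beta> where "\<beta> = (\<lambda>k. a * real k + 1)"
  have b: "\<beta> k > 0" for k using a by (simp add: \<beta>_def add_nonneg_pos)
  have Gp: "Gamma (a * real k + 1) > 0" for k using Gamma_pos_ak[OF a] by simp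
  have pa: "p powr a > 0" using p by simp
  have pb: "p powr \<beta> k = p * (p powr a) ^ k" for k
    using p by (simp add: \<beta>_def powr_add powr_ak mult.commute)
  have q: "norm lam / p powr a < 1" using pl pa by simp
  have S: "summable (\<lambda>k. norm (c k) * (Gamma (\<beta> k) / p powr \<beta> k))"
  proof -
    have "(\<lambda>k. norm (c k) * (Gamma (\<beta> k) / p powr \<beta> k)) = (\<lambda>k. (1/p) * (norm lam / p powr a) ^ k)"
      using Gp by (auto simp: c_def \<beta>_def pb[unfolded \<beta>_def] norm_divide norm_power power_divide fun_eq_iff abs_of_pos less_imp_neq[symmetric])
    then show ?thesis using q by (simp add: summable_mult)
  qed
  have F: "(\<lambda>k. c k * of_real (t powr (\<beta> k - 1))) sums mittag_leffler1 a (lam * of_real (t powr a))" if t: "t > 0" for t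
  proof -
    have "(\<lambda>k. c k * of_real (t powr (\<beta> k - 1))) = (\<lambda>k. (lam * of_real (t powr a)) ^ k / Gamma (complex_of_real (a * real k + 1)))"
      unfolding Gamma_complex_of_real using t by (auto simp: c_def \<beta>_def powr_ak power_mult_distrib fun_eq_iff)
    then show ?thesis using ml_sums[OF a zero_less_one] by (simp add: mittag_leffler1_def)
  qed
  have Fa: "summable (\<lambda>k. norm (c k) * t powr (\<beta> k - 1))" if t: "t > 0" for t
  proof -
    have "(\<lambda>k. norm (c k) * t powr (\<beta> k - 1)) = (\<lambda>k. (norm lam * t powr a) ^ k / Gamma (a * real k + 1))"
      using t Gp by (auto simp: c_def \<beta>_def powr_ak norm_divide norm_power power_mult_distrib fun_eq_iff abs_of_pos)
    then show ?thesis using ml_summable_real[OF a zero_less_one, of "norm lam * t powr a"] by simp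
  qed
  have Fm: "(\<lambda>t. mittag_leffler1 a (lam * of_real (t powr a))) \<in> borel_measurable borel"
    unfolding mittag_leffler1_def
    by (rule measurable_compose[OF _ ml_measurable[OF a zero_less_one]]) measurable
  note L = laplace_series[OF b p S F Fa Fm]
  show "integrable lborel (\<lambda>t. indicator {0..} t *\<^sub>R (mittag_leffler1 a (lam * of_real (t powr a)) * of_real (exp (-p*t))))"
    by (rule L(1))
  have "(\<lambda>k. c k * of_real (Gamma (\<beta> k) / p powr \<beta> k)) = (\<lambda>k. (1 / of_real p) * (lam / of_real (p powr a)) ^ k)"
    using Gp p by (auto simp: c_def \<beta>_def pb[unfolded \<beta>_def] power_divide fun_eq_iff less_imp_neq[symmetric])
  moreover have "(\<lambda>k. (1 / of_real p) * (lam / of_real (p powr a)) ^ k) sums ((1 / of_real p) * (1 / (1 - lam / of_real (p powr a))))"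
    using q pa by (intro sums_mult geometric_sums) (simp add: norm_divide)
  ultimately show "(LINT t|lborel. indicator {0..} t *\<^sub>R (mittag_leffler1 a (lam * of_real (t powr a)) * of_real (exp (-p*t))))
         = 1 / (of_real p * (1 - lam / of_real (p powr a)))"
    using L(2) by (simp add: sums_iff)
qed


lemma laplace_g:
  fixes a p :: real and lam :: complex
  assumes a: "0 < a" and p: "p > 0" and pl: "norm lam < p powr a"
  shows "integrable lborel (\<lambda>t. indicator {0..} t *\<^sub>R ((of_real (t powr (a - 1)) * mittag_leffler a a (lam * of_real (t powr a))) * of_real (exp (-p*t))))"
    and "(LINT t|lborel. indicator {0..} t *\<^sub>R ((of_real (t powr (a - 1)) * mittag_leffler a a (lam * of_real (t powr a))) * of_real (exp (-p*t))))
         = 1 / (of_real (p powr a) * (1 - lam / of_real (p powr a)))"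
proof -
  define c where "c = (\<lambda>k. lam ^ k / of_real (Gamma (a * real k + a)))"
  define \<beta> where "\<beta> = (\<lambda>k. a * real k + a)"
  have b: "\<beta> k > 0" for k using a by (simp add: \<beta>_def add_nonneg_pos)
  have Gp: "Gamma (a * real k + a) > 0" for k using Gamma_pos_ak[OF a a] by simp
  have pa: "p powr a > 0" using p by simp
  have pb: "p powr \<beta> k = p powr a * (p powr a) ^ k" for k
    using p by (simp add: \<beta>_def powr_add powr_ak mult.commute)
  have tb: "t powr (\<beta> k - 1) = t powr (a - 1) * (t powr a) ^ k" if "t > 0" for t k
    using that by (simp add: \<beta>_def powr_add[symmetric] powr_ak[symmetric] algebra_simps)
  have q: "norm lam / p powr a < 1" using pl pa by simp
  have S: "summable (\<lambda>k. norm (c k) * (Gamma (\<beta> k) / p powr \<beta> k))"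
  proof -
    have "(\<lambda>k. norm (c k) * (Gamma (\<beta> k) / p powr \<beta> k)) = (\<lambda>k. (1/p powr a) * (norm lam / p powr a) ^ k)"
      using Gp by (auto simp: c_def \<beta>_def pb[unfolded \<beta>_def] norm_divide norm_power power_divide fun_eq_iff abs_of_pos less_imp_neq[symmetric])
    then show ?thesis using q by (simp add: summable_mult)
  qed
  have F: "(\<lambda>k. c k * of_real (t powr (\<beta> k - 1))) sums (of_real (t powr (a - 1)) * mittag_leffler a a (lam * of_real (t powr a)))" if t: "t > 0" for t
  proof -
    have "(\<lambda>k. c k * of_real (t powr (\<beta> k - 1))) = (\<lambda>k. of_real (t powr (a - 1)) * ((lam * of_real (t powr a)) ^ k / Gamma (complex_of_real (a * real k + a))))"
      unfolding Gamma_complex_of_real using t by (auto simp: c_def tb power_mult_distrib fun_eq_iff)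
    then show ?thesis using sums_mult[OF ml_sums[OF a a]] by simp
  qed
  have Fa: "summable (\<lambda>k. norm (c k) * t powr (\<beta> k - 1))" if t: "t > 0" for t
  proof -
    have "(\<lambda>k. norm (c k) * t powr (\<beta> k - 1)) = (\<lambda>k. t powr (a - 1) * ((norm lam * t powr a) ^ k / Gamma (a * real k + a)))"
      using t Gp by (auto simp: c_def tb norm_divide norm_power power_mult_distrib fun_eq_iff abs_of_pos)
    then show ?thesis using summable_mult[OF ml_summable_real[OF a a, of "norm lam * t powr a"]] by simp
  qed
  have Fm: "(\<lambda>t. of_real (t powr (a - 1)) * mittag_leffler a a (lam * of_real (t powr a))) \<in> borel_measurable borel"
    by (intro borel_measurable_times measurable_compose[OF _ ml_measurable[OF a a]]) measurable
  note L = laplace_series[OF b p S F Fa Fm]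
  show "integrable lborel (\<lambda>t. indicator {0..} t *\<^sub>R ((of_real (t powr (a - 1)) * mittag_leffler a a (lam * of_real (t powr a))) * of_real (exp (-p*t))))"
    by (rule L(1))
  have "(\<lambda>k. c k * of_real (Gamma (\<beta> k) / p powr \<beta> k)) = (\<lambda>k. (1 / of_real (p powr a)) * (lam / of_real (p powr a)) ^ k)"
    using Gp p by (auto simp: c_def \<beta>_def pb[unfolded \<beta>_def] power_divide fun_eq_iff less_imp_neq[symmetric])
  moreover have "(\<lambda>k. (1 / of_real (p powr a)) * (lam / of_real (p powr a)) ^ k) sums ((1 / of_real (p powr a)) * (1 / (1 - lam / of_real (p powr a))))"
    using q pa by (intro sums_mult geometric_sums) (simp add: norm_divide)
  ultimately show "(LINT t|lborel. indicator {0..} t *\<^sub>R ((of_real (t powr (a - 1)) * mittag_leffler a a (lam * of_real (t powr a))) * of_real (exp (-p*t))))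
         = 1 / (of_real (p powr a) * (1 - lam / of_real (p powr a)))"
    using L(2) by (simp add: sums_iff)
qed

lemma laplace_h:
  fixes w p :: real
  assumes w: "0 \<le> w" and p: "p > w"
  shows "integrable lborel (\<lambda>t. indicator {0..} t *\<^sub>R (exp (\<i> * of_real (w * t)) * of_real (exp (-p*t))))"
    and "(LINT t|lborel. indicator {0..} t *\<^sub>R (exp (\<i> * of_real (w * t)) * of_real (exp (-p*t))))
         = 1 / (of_real p * (1 - \<i> * of_real w / of_real p))"
proof -
  have p0: "p > 0" using w p by simp
  define c where "c = (\<lambda>m. (\<i> * of_real w) ^ m / of_real (fact m))"
  define \<beta> where "\<beta> = (\<lambda>m. real (Suc m))"
  have b: "\<beta> k > 0" for k by (simp add: \<beta>_def)
  have G: "Gamma (\<beta> m) = fact m" for m using Gamma_fact[of m] by (simp add: \<beta>_def add.commute)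
  have pb: "p powr \<beta> m = p * p ^ m" for m using p0 powr_realpow[OF p0, of "Suc m"] by (simp add: \<beta>_def del: of_nat_Suc)
  have tb: "t powr (\<beta> m - 1) = t ^ m" if "t > 0" for t m
    using that powr_realpow[OF that, of m] by (simp add: \<beta>_def)
  have q: "w / p < 1" using p p0 by simp
  have nc: "norm (c k) = w ^ k / fact k" for k
  proof -
    have "norm (complex_of_real (fact k)) = fact k" by (simp only: norm_of_real) simp
    then show ?thesis using w by (simp add: c_def norm_divide norm_power norm_mult del: of_real_fact)
  qed
  have S: "summable (\<lambda>k. norm (c k) * (Gamma (\<beta> k) / p powr \<beta> k))"
  proof -
    have "(\<lambda>k. norm (c k) * (Gamma (\<beta> k) / p powr \<beta> k)) = (\<lambda>k. (1/p) * (w / p) ^ k)"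
      using w by (auto simp: nc G pb power_divide fun_eq_iff)
    then show ?thesis using q w p0 by (simp add: summable_mult)
  qed
  have F: "(\<lambda>k. c k * of_real (t powr (\<beta> k - 1))) sums exp (\<i> * of_real (w * t))" if t: "t > 0" for t
  proof -
    have "(\<lambda>k. c k * of_real (t powr (\<beta> k - 1))) = (\<lambda>k. (\<i> * of_real (w * t)) ^ k /\<^sub>R fact k)"
      using t by (auto simp: c_def tb power_mult_distrib fun_eq_iff scaleR_conv_of_real divide_inverse mult_ac)
    then show ?thesis using exp_converges[of "\<i> * of_real (w * t)"] by simp
  qed
  have Fa: "summable (\<lambda>k. norm (c k) * t powr (\<beta> k - 1))" if t: "t > 0" for t
  proof -
    have "(\<lambda>k. norm (c k) * t powr (\<beta> k - 1)) = (\<lambda>k. (w * t) ^ k /\<^sub>R fact k)"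
      using t w by (auto simp: nc tb power_mult_distrib fun_eq_iff divide_inverse mult_ac)
    then show ?thesis using exp_converges[of "w * t"] by (simp add: sums_summable)
  qed
  have Fm: "(\<lambda>t. exp (\<i> * of_real (w * t))) \<in> borel_measurable borel"
    by measurable
  note L = laplace_series[OF b p0 S F Fa Fm]
  show "integrable lborel (\<lambda>t. indicator {0..} t *\<^sub>R (exp (\<i> * of_real (w * t)) * of_real (exp (-p*t))))"
    by (rule L(1))
  have "(\<lambda>k. c k * of_real (Gamma (\<beta> k) / p powr \<beta> k)) = (\<lambda>k. (1 / of_real p) * (\<i> * of_real w / of_real p) ^ k)"
    using p0 by (auto simp: c_def G pb power_divide fun_eq_iff)
  moreover have "(\<lambda>k. (1 / of_real p) * (\<i> * of_real w / of_real p) ^ k) sums ((1 / of_real p) * (1 / (1 - \<i> * of_real w / of_real p)))"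
    using q p0 w by (intro sums_mult geometric_sums) (simp add: norm_divide norm_mult)
  ultimately show "(LINT t|lborel. indicator {0..} t *\<^sub>R (exp (\<i> * of_real (w * t)) * of_real (exp (-p*t))))
         = 1 / (of_real p * (1 - \<i> * of_real w / of_real p))"
    using L(2) by (simp add: sums_iff)
qed

lemma ind_Icc: "indicator {0..t} s = (if 0 \<le> s \<and> s \<le> (t::real) then 1 else (0::real))"
  by (auto simp: indicator_def)

lemma ind_meas:
  shows "(\<lambda>x::real\<times>real. indicator {0..fst x} (snd x) :: real) \<in> borel_measurable (lborel \<Otimes>\<^sub>M lborel)"
proof -
  have e: "(\<lambda>x::real\<times>real. indicator {0..fst x} (snd x) :: real) = indicator {x. 0 \<le> snd x \<and> snd x \<le> fst x}"
    by (auto simp: indicator_def fun_eq_iff)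
  have "{x::real\<times>real. 0 \<le> snd x \<and> snd x \<le> fst x} \<in> sets borel"
    by (intro borel_closed closed_Collect_conj closed_Collect_le continuous_intros)
  then have s: "{x::real\<times>real. 0 \<le> snd x \<and> snd x \<le> fst x} \<in> sets (lborel \<Otimes>\<^sub>M lborel)" by (simp add: borel_prod[symmetric])
  have "(indicator {x::real\<times>real. 0 \<le> snd x \<and> snd x \<le> fst x} :: real\<times>real \<Rightarrow> real) \<in> borel_measurable (lborel \<Otimes>\<^sub>M lborel)"
    using s by (rule borel_measurable_indicator)
  then show ?thesis unfolding e by simp
qed
lemma conv_meas:
  fixes G H :: "real \<Rightarrow> complex"
  assumes Gm: "G \<in> borel_measurable borel" and Hm: "H \<in> borel_measurable borel"
  shows "(\<lambda>(t, s). indicator {0..t} s *\<^sub>R (G (t - s) * H s)) \<in> borel_measurable (lborel \<Otimes>\<^sub>M lborel)"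
proof -
  have m1: "(\<lambda>x::real\<times>real. G (fst x - snd x) * H (snd x)) \<in> borel_measurable (lborel \<Otimes>\<^sub>M lborel)"
    using Gm Hm by measurable
  have "(\<lambda>x::real\<times>real. indicator {0..fst x} (snd x) *\<^sub>R (G (fst x - snd x) * H (snd x))) \<in> borel_measurable (lborel \<Otimes>\<^sub>M lborel)"
    by (intro borel_measurable_scaleR ind_meas m1)
  then show ?thesis by (simp add: case_prod_beta')
qed

lemma convolution_laplace:
  fixes G H :: "real \<Rightarrow> complex" and p :: real
  assumes p: "p > 0"
    and Gm: "G \<in> borel_measurable borel" and Hm: "H \<in> borel_measurable borel"
    and Hb: "\<And>s. norm (H s) \<le> 1"
    and Gi: "integrable lborel (\<lambda>u. indicator {0..} u *\<^sub>R (G u * of_real (exp (-p*u))))"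
    and Hi: "integrable lborel (\<lambda>s. indicator {0..} s *\<^sub>R (H s * of_real (exp (-p * s))))"
  defines "C \<equiv> (\<lambda>t. integral\<^sup>L lborel (\<lambda>s. indicator {0..t} s *\<^sub>R (G (t - s) * H s)))"
  shows "integrable lborel (\<lambda>t. indicator {0..} t *\<^sub>R (C t * of_real (exp (-p * t))))"
    and "(LINT t|lborel. indicator {0..} t *\<^sub>R (C t * of_real (exp (-p * t))))
          = (LINT u|lborel. indicator {0..} u *\<^sub>R (G u * of_real (exp (-p*u))))
           * (LINT s|lborel. indicator {0..} s *\<^sub>R (H s * of_real (exp (-p * s))))"
    and "\<And>t. t \<ge> 0 \<Longrightarrow> integrable lborel (\<lambda>s. indicator {0..t} s *\<^sub>R (G (t - s) * H s))"
    and "C \<in> borel_measurable borel"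
proof -
  define G' where "G' = (\<lambda>u. indicator {0..} u *\<^sub>R (G u * of_real (exp (-p*u))))"
  define H' where "H' = (\<lambda>s. indicator {0..} s *\<^sub>R (H s * of_real (exp (-p * s))))"
  have G'm: "G' \<in> borel_measurable borel" unfolding G'_def using Gm by measurable
  have H'm: "H' \<in> borel_measurable borel" unfolding H'_def using Hm by measurable
  define f where "f = (\<lambda>s t. G' (t - s) * H' s)"
  have fe: "f s t = (indicator {0..} t * exp (-p * t)) *\<^sub>R (indicator {0..t} s *\<^sub>R (G (t - s) * H s))" for s t
  proof (cases "0 \<le> s \<and> s \<le> t")
    case True
    have "exp (-p*(t-s)) * exp (-p * s) = exp (-p * t)" by (simp add: exp_add[symmetric] algebra_simps)
    then have "complex_of_real (exp (-p*(t-s))) * complex_of_real (exp (-p * s)) = complex_of_real (exp (-p * t))"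
      by (metis of_real_mult)
    then show ?thesis using True
      by (simp add: f_def G'_def H'_def indicator_def scaleR_conv_of_real mult_ac)
  next
    case False
    then show ?thesis by (auto simp: f_def G'_def H'_def indicator_def)
  qed
  have fm: "(\<lambda>(s, t). f s t) \<in> borel_measurable (lborel \<Otimes>\<^sub>M lborel)"
    unfolding f_def using G'm H'm by measurable
  have nG: "(LBINT t. norm (G' (t - s))) = (LBINT u. norm (G' u))" for s
    using lborel_integral_real_affine[of 1 "\<lambda>u. norm (G' u)" "-s"] by simp
  have Gi': "integrable lborel G'" using Gi by (simp add: G'_def)
  have Hi': "integrable lborel H'" using Hi by (simp add: H'_def)
  have fi: "integrable (lborel \<Otimes>\<^sub>M lborel) (\<lambda>(s, t). f s t)"
  proof (rule lborel_pair.Fubini_integrable)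
    show "(\<lambda>(s, t). f s t) \<in> borel_measurable (lborel \<Otimes>\<^sub>M lborel)" by (rule fm)
    have "(\<lambda>s. LBINT t. norm (f s t)) = (\<lambda>s. norm (H' s) * (LBINT u. norm (G' u)))"
      by (auto simp: f_def norm_mult nG fun_eq_iff)
    then show "integrable lborel (\<lambda>s. LBINT t. norm (case (s, t) of (s, t) \<Rightarrow> f s t))"
      using Hi' by (simp add: integrable_norm)
    show "AE s in lborel. integrable lborel (\<lambda>t. case (s, t) of (s, t) \<Rightarrow> f s t)"
    proof (rule AE_I2)
      fix s
      have "integrable lborel (\<lambda>t. G' (- s + 1 * t))"
        by (rule lborel_integrable_real_affine[OF Gi']) simp
      then show "integrable lborel (\<lambda>t. case (s, t) of (s, t) \<Rightarrow> f s t)"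
        by (simp add: f_def)
    qed
  qed
  have Ceq: "(LBINT s. f s t) = indicator {0..} t *\<^sub>R (C t * of_real (exp (-p * t)))" for t
  proof -
    have "(LBINT s. f s t) = (LBINT s. (indicator {0..} t * exp (-p * t)) *\<^sub>R (indicator {0..t} s *\<^sub>R (G (t - s) * H s)))"
      by (simp only: fe)
    also have "\<dots> = (indicator {0..} t * exp (-p * t)) *\<^sub>R C t"
      unfolding C_def by (rule integral_scaleR_right)
    finally show ?thesis by (simp add: scaleR_conv_of_real mult_ac)
  qed
  show "integrable lborel (\<lambda>t. indicator {0..} t *\<^sub>R (C t * of_real (exp (-p * t))))"
    using lborel_pair.integrable_snd[OF fi] by (simp add: Ceq)
  have "(LBINT t. LBINT s. f s t) = (LBINT s. LBINT t. f s t)"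
    by (rule lborel_pair.Fubini_integral[OF fi])
  also have "\<dots> = (LBINT s. H' s * (LBINT u. G' u))"
  proof -
    have "(LBINT t. f s t) = H' s * (LBINT u. G' u)" for s
    proof -
      have "(LBINT u. G' u) = (LBINT t. G' (-s + 1 * t))"
        using lborel_integral_real_affine[of 1 G' "-s"] by simp
      then show ?thesis by (simp add: f_def mult.commute)
    qed
    then show ?thesis by simp
  qed
  also have "\<dots> = (LBINT u. G' u) * (LBINT s. H' s)" by (simp add: mult.commute)
  finally show "(LINT t|lborel. indicator {0..} t *\<^sub>R (C t * of_real (exp (-p * t))))
          = (LINT u|lborel. indicator {0..} u *\<^sub>R (G u * of_real (exp (-p*u))))
           * (LINT s|lborel. indicator {0..} s *\<^sub>R (H s * of_real (exp (-p * s))))"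
    by (simp add: Ceq G'_def H'_def)
  show "integrable lborel (\<lambda>s. indicator {0..t} s *\<^sub>R (G (t - s) * H s))" if t: "t \<ge> 0" for t
  proof (rule Bochner_Integration.integrable_bound)
    show "integrable lborel (\<lambda>s. exp (p * t) * norm (G' (t + (-1) * s)))"
      by (intro integrable_mult_right integrable_norm lborel_integrable_real_affine[OF Gi']) simp
    show "(\<lambda>s. indicator {0..t} s *\<^sub>R (G (t - s) * H s)) \<in> borel_measurable lborel"
      unfolding ind_Icc using Gm Hm by measurable
    show "AE s in lborel. norm (indicator {0..t} s *\<^sub>R (G (t - s) * H s)) \<le> norm (exp (p * t) * norm (G' (t + (-1) * s)))"
    proof (rule AE_I2)
      fix s
      show "norm (indicator {0..t} s *\<^sub>R (G (t - s) * H s)) \<le> norm (exp (p * t) * norm (G' (t + (-1) * s)))"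
      proof (cases "0 \<le> s \<and> s \<le> t")
        case True
        have "norm (G (t - s) * H s) \<le> norm (G (t - s))"
          using Hb[of s] by (simp add: norm_mult mult_left_le)
        also have "\<dots> \<le> exp (p * t) * (norm (G (t - s)) * exp (-p*(t-s)))"
        proof -
          have e1: "exp (p * t) * exp (-p*(t-s)) = exp (p * s)" by (simp add: exp_add[symmetric] algebra_simps)
          have e2: "exp (p * s) \<ge> 1" using True p by simp
          have "exp (p * t) * (norm (G (t - s)) * exp (-p*(t-s))) = norm (G (t-s)) * exp (p * s)"
            using e1 by (simp add: mult_ac)
          moreover have "norm (G (t-s)) * 1 \<le> norm (G (t-s)) * exp (p * s)"
            using e2 by (intro mult_left_mono) auto
          ultimately show ?thesis by (metis mult.right_neutral)
        qed
        finally show ?thesis using True by (simp add: G'_def norm_mult)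
      next
        case False
        then show ?thesis by (auto simp: indicator_def)
      qed
    qed
  qed
  show "C \<in> borel_measurable borel"
  proof -
    have "C \<in> borel_measurable lborel"
      unfolding C_def by (rule lborel.borel_measurable_lebesgue_integral) (use conv_meas[OF Gm Hm] in simp)
    then show ?thesis by simp
  qed
qed

lemma laplace_pow:
  fixes c :: real
  assumes c: "c > 0"
  shows "integrable lborel (\<lambda>t. indicator {0..} t * (t ^ n * exp (-c*t)))"
    and "(LBINT t. indicator {0..} t * (t ^ n * exp (-c*t))) = fact n / c ^ Suc n"
proof -
  have b: "real (Suc n) > 0" by simp
  have ae: "AE t in lborel. indicator {0..} t * (t powr (real (Suc n) - 1) * exp (-c*t)) = indicator {0..} t * (t ^ n * exp (-c*t))"
    using AE_lborel_singleton[of 0] by eventually_elim (auto simp: indicator_def powr_realpow)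
  have m: "(\<lambda>t. indicator {0..} t * (t ^ n * exp (-c*t))) \<in> borel_measurable lborel" by measurable
  note L = laplace_powr[OF b c]
  show "integrable lborel (\<lambda>t. indicator {0..} t * (t ^ n * exp (-c*t)))"
    using integrable_cong_AE_imp[OF L(1) m ae] .
  have "(LBINT t. indicator {0..} t * (t ^ n * exp (-c*t))) = (LBINT t. indicator {0..} t * (t powr (real (Suc n) - 1) * exp (-c*t)))"
  proof -
    have m2: "(\<lambda>t. indicator {0..} t * (t powr (real (Suc n) - 1) * exp (-c*t))) \<in> borel_measurable lborel" by measurable
    show ?thesis using integral_cong_AE[OF m2 m ae] by (rule sym)
  qed
  also have "\<dots> = Gamma (real (Suc n)) / c powr real (Suc n)" by (rule L(2))
  also have "\<dots> = fact n / c ^ Suc n"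
  proof -
    have "Gamma (real (Suc n)) = fact n" using Gamma_fact[of n] by (simp add: add.commute)
    moreover have "c powr real (Suc n) = c ^ Suc n" using c by (rule powr_realpow)
    ultimately show ?thesis by simp
  qed
  finally show "(LBINT t. indicator {0..} t * (t ^ n * exp (-c*t))) = fact n / c ^ Suc n" .
qed

lemma lap_basic:
  fixes \<phi> :: "real \<Rightarrow> complex" and s :: complex
  assumes \<phi>m: "\<phi> \<in> borel_measurable borel" and bnd: "\<And>t. t \<ge> 0 \<Longrightarrow> norm (\<phi> t) \<le> M"
    and s: "Re s > 0"
  shows "integrable lborel (\<lambda>t. indicator {0..} t *\<^sub>R (\<phi> t * exp (- (s * of_real t))))"
    and "norm (LINT t|lborel. indicator {0..} t *\<^sub>R (\<phi> t * exp (- (s * of_real t)))) \<le> M / Re s"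
proof -
  have m: "(\<lambda>t. indicator {0..} t *\<^sub>R (\<phi> t * exp (- (s * of_real t)))) \<in> borel_measurable lborel"
    using \<phi>m by measurable
  have nb: "norm (indicator {0..} t *\<^sub>R (\<phi> t * exp (- (s * of_real t)))) \<le> M * (indicator {0..} t * (t ^ 0 * exp (- Re s * t)))" for t
  proof (cases "t \<ge> 0")
    case True
    have "norm (\<phi> t * exp (- (s * of_real t))) = norm (\<phi> t) * exp (- Re s * t)"
      by (simp add: norm_mult)
    also have "\<dots> \<le> M * exp (- Re s * t)" using bnd[OF True] by (intro mult_right_mono) auto
    finally show ?thesis using True by simp
  next
    case False
    then show ?thesis by simp
  qed
  note L = laplace_pow[OF s, of 0]
  show i: "integrable lborel (\<lambda>t. indicator {0..} t *\<^sub>R (\<phi> t * exp (- (s * of_real t))))"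
  proof (rule Bochner_Integration.integrable_bound[OF integrable_mult_right[OF L(1), of M] m])
    show "AE t in lborel. norm (indicator {0..} t *\<^sub>R (\<phi> t * exp (- (s * of_real t)))) \<le> norm (M * (indicator {0..} t * (t ^ 0 * exp (- Re s * t))))"
    proof (rule AE_I2)
      fix t
      show "norm (indicator {0..} t *\<^sub>R (\<phi> t * exp (- (s * of_real t)))) \<le> norm (M * (indicator {0..} t * (t ^ 0 * exp (- Re s * t))))"
        using nb[of t] unfolding real_norm_def by (rule order.trans) (rule abs_ge_self)
    qed
  qed
  have "norm (LINT t|lborel. indicator {0..} t *\<^sub>R (\<phi> t * exp (- (s * of_real t)))) \<le> (LBINT t. M * (indicator {0..} t * (t ^ 0 * exp (- Re s * t))))"
    by (rule Bochner_Integration.integral_norm_bound_integral[OF i integrable_mult_right[OF L(1)]]) (rule nb)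
  also have "\<dots> = M / Re s" using L(2) by simp
  finally show "norm (LINT t|lborel. indicator {0..} t *\<^sub>R (\<phi> t * exp (- (s * of_real t)))) \<le> M / Re s" .
qed

lemma lap_power_series:
  fixes \<phi> :: "real \<Rightarrow> complex" and s0 z :: complex
  assumes \<phi>m: "\<phi> \<in> borel_measurable borel" and bnd: "\<And>t. t \<ge> 0 \<Longrightarrow> norm (\<phi> t) \<le> M"
    and s0: "Re s0 > 0" and z: "norm z < Re s0"
  shows "(\<lambda>i. (LINT t|lborel. indicator {0..} t *\<^sub>R (\<phi> t * exp (- (s0 * of_real t)) * ((- of_real t) ^ i / fact i))) * z ^ i)
           sums (LINT t|lborel. indicator {0..} t *\<^sub>R (\<phi> t * exp (- ((s0 + z) * of_real t))))"
proof -
  define c where "c = Re s0"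
  have c: "c > 0" using s0 by (simp add: c_def)
  have M0: "M \<ge> 0" using bnd[of 0] norm_ge_zero[of "\<phi> 0"] by linarith
  define f where "f = (\<lambda>i t. indicator {0..} t *\<^sub>R (\<phi> t * exp (- (s0 * of_real t)) * ((- of_real t) ^ i / fact i)) * z ^ i)"
  define bd where "bd = (\<lambda>i t. (M * norm z ^ i / fact i) * (indicator {0..} t * (t ^ i * exp (- c * t))))"
  have fm: "f i \<in> borel_measurable lborel" for i unfolding f_def using \<phi>m by measurable
  have nf: "norm (f i t) = indicator {0..} t * (norm (\<phi> t) * exp (- c * t) * ((t * norm z) ^ i / fact i))" for i t
    by (cases "t \<ge> 0") (simp_all add: f_def norm_mult norm_divide norm_power c_def power_mult_distrib)
  have nfb: "norm (f i t) \<le> bd i t" for i t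
  proof (cases "t \<ge> 0")
    case True
    have "norm (f i t) = norm (\<phi> t) * ((norm z ^ i / fact i) * (t ^ i * exp (- c * t)))"
      using True by (simp add: nf power_mult_distrib)
    also have "\<dots> \<le> M * ((norm z ^ i / fact i) * (t ^ i * exp (- c * t)))"
      using bnd[OF True] True by (intro mult_right_mono) auto
    finally show ?thesis using True by (simp add: bd_def)
  next
    case False
    then show ?thesis by (simp add: nf bd_def)
  qed
  have bdi: "integrable lborel (bd i)" for i
    unfolding bd_def by (intro integrable_mult_right laplace_pow(1) c)
  have bdI: "integral\<^sup>L lborel (bd i) = (M / c) * (norm z / c) ^ i" for i
    unfolding bd_def integral_mult_right_zero laplace_pow(2)[OF c] using c by (simp add: power_divide)
  have fi: "integrable lborel (f i)" for i
  proof (rule Bochner_Integration.integrable_bound[OF bdi fm])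
    show "AE t in lborel. norm (f i t) \<le> norm (bd i t)"
      by (intro AE_I2 order.trans[OF nfb[of i]]) (simp only: real_norm_def abs_ge_self)
  qed
  have fnI: "(LINT t|lborel. norm (f i t)) \<le> (M / c) * (norm z / c) ^ i" for i
  proof -
    have "(LINT t|lborel. norm (f i t)) \<le> integral\<^sup>L lborel (bd i)"
      by (intro integral_mono integrable_norm fi bdi nfb)
    then show ?thesis by (simp add: bdI)
  qed
  have q: "norm z / c < 1" using z c by (simp add: c_def)
  have sumI: "summable (\<lambda>i. LINT t|lborel. norm (f i t))"
  proof (rule summable_comparison_test[OF _ summable_mult[OF summable_geometric[of "norm z / c"]], of _ "M / c"])
    show "norm (norm z / c) < 1" using q c by simp
    show "\<exists>N. \<forall>n\<ge>N. norm (LINT t|lborel. norm (f n t)) \<le> M / c * (norm z / c) ^ n"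
      using fnI by (auto intro!: exI[of _ 0] simp: integral_nonneg_AE)
  qed
  have AEs: "AE t in lborel. summable (\<lambda>i. norm (f i t))"
  proof (rule AE_I2)
    fix t
    have "summable (\<lambda>i. (indicator {0..} t * (norm (\<phi> t) * exp (- c * t))) * (inverse (fact i) * (t * norm z) ^ i))"
      by (intro summable_mult summable_exp)
    moreover have "(\<lambda>i. norm (f i t)) = (\<lambda>i. (indicator {0..} t * (norm (\<phi> t) * exp (- c * t))) * (inverse (fact i) * (t * norm z) ^ i))"
      by (simp add: nf divide_inverse mult_ac fun_eq_iff)
    ultimately show "summable (\<lambda>i. norm (f i t))" by simp
  qed
  have pt: "(\<lambda>i. f i t) sums (indicator {0..} t *\<^sub>R (\<phi> t * exp (- ((s0 + z) * of_real t))))" for t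
  proof -
    have e: "(\<lambda>i. (- (z * of_real t)) ^ i /\<^sub>R fact i) sums exp (- (z * of_real t))"
      by (rule exp_converges)
    have S1: "(\<lambda>i. (indicator {0..} t *\<^sub>R (\<phi> t * exp (- (s0 * of_real t)))) * ((- (z * of_real t)) ^ i /\<^sub>R fact i))
       sums ((indicator {0..} t *\<^sub>R (\<phi> t * exp (- (s0 * of_real t)))) * exp (- (z * of_real t)))"
      by (rule sums_mult[OF e])
    have S2: "(\<lambda>i. (indicator {0..} t *\<^sub>R (\<phi> t * exp (- (s0 * of_real t)))) * ((- (z * of_real t)) ^ i /\<^sub>R fact i)) = (\<lambda>i. f i t)"
    proof
      fix i
      have "(- (z * of_real t)) ^ i = (- of_real t) ^ i * z ^ i" 
        by (metis minus_mult_right mult.commute power_mult_distrib)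
      then show "(indicator {0..} t *\<^sub>R (\<phi> t * exp (- (s0 * of_real t)))) * ((- (z * of_real t)) ^ i /\<^sub>R fact i) = f i t"
        by (simp add: f_def scaleR_conv_of_real divide_inverse)
    qed
    have S3: "(indicator {0..} t *\<^sub>R (\<phi> t * exp (- (s0 * of_real t)))) * exp (- (z * of_real t))
        = indicator {0..} t *\<^sub>R (\<phi> t * exp (- ((s0 + z) * of_real t)))"
    proof -
      have "exp (- (s0 * of_real t)) * exp (- (z * of_real t)) = exp (- ((s0 + z) * of_real t))"
        by (subst exp_add[symmetric]) (simp add: algebra_simps)
      then show ?thesis by (simp add: scaleR_conv_of_real mult.assoc)
    qed
    show ?thesis using S1 unfolding S2 S3 .
  qed
  note S = sums_integral[OF fi AEs sumI]
  have "(\<lambda>t. \<Sum>i. f i t) = (\<lambda>t. indicator {0..} t *\<^sub>R (\<phi> t * exp (- ((s0 + z) * of_real t))))"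
    using pt by (auto simp: sums_iff fun_eq_iff)
  moreover have "integral\<^sup>L lborel (f i) = (LINT t|lborel. indicator {0..} t *\<^sub>R (\<phi> t * exp (- (s0 * of_real t)) * ((- of_real t) ^ i / fact i))) * z ^ i" for i
    unfolding f_def by (rule integral_mult_left_zero)
  ultimately show ?thesis using S by simp
qed

lemma lap_holomorphic:
  fixes \<phi> :: "real \<Rightarrow> complex"
  assumes \<phi>m: "\<phi> \<in> borel_measurable borel" and bnd: "\<And>t. t \<ge> 0 \<Longrightarrow> norm (\<phi> t) \<le> M"
  shows "(\<lambda>s. LINT t|lborel. indicator {0..} t *\<^sub>R (\<phi> t * exp (- (s * of_real t)))) holomorphic_on {s. Re s > 0}"
proof -
  let ?L = "\<lambda>s. LINT t|lborel. indicator {0..} t *\<^sub>R (\<phi> t * exp (- (s * of_real t)))"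
  have op: "open {s::complex. Re s > 0}" by (simp add: open_halfspace_Re_gt)
  have "\<exists>f'. (?L has_field_derivative f') (at s0)" if s0: "Re s0 > 0" for s0
  proof -
    have h: "?L holomorphic_on ball s0 (Re s0)"
    proof (rule power_series_holomorphic)
      fix w assume "w \<in> ball s0 (Re s0)"
      then have "norm (w - s0) < Re s0" by (simp add: dist_norm norm_minus_commute)
      from lap_power_series[OF \<phi>m bnd s0 this] show "(\<lambda>n. (LINT t|lborel. indicator {0..} t *\<^sub>R (\<phi> t * exp (- (s0 * of_real t)) * ((- of_real t) ^ n / fact n))) * (w - s0) ^ n) sums ?L w"
        by simp
    qed
    have "?L field_differentiable at s0"
      by (rule holomorphic_on_imp_differentiable_at[OF h]) (use s0 in auto)
    then show ?thesis by (auto simp: field_differentiable_def)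
  qed
  then show ?thesis using op by (simp add: holomorphic_on_open)
qed

lemma iw_powr:
  fixes w a :: real assumes w: "w > 0"
  shows "(\<i> * complex_of_real w) powr complex_of_real a = complex_of_real (w powr a) * (complex_of_real (cos (pi * a / 2)) + \<i> * complex_of_real (sin (pi * a / 2)))"
proof -
  have ne: "\<i> * complex_of_real w \<noteq> 0" using w by simp
  have L: "Ln (\<i> * complex_of_real w) = complex_of_real (ln w) + \<i> * complex_of_real (pi / 2)"
  proof -
    have "Ln (complex_of_real w * \<i>) = Ln (complex_of_real w) + Ln \<i>"
      using w by (intro Ln_times_of_real) auto
    then show ?thesis using w by (simp add: Ln_of_real Ln_ii mult.commute)
  qed
  have "(\<i> * complex_of_real w) powr complex_of_real a = exp (complex_of_real a * Ln (\<i> * complex_of_real w))"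
    using ne by (simp add: powr_def)
  also have "\<dots> = exp (complex_of_real (a * ln w)) * exp (\<i> * complex_of_real (pi * a / 2))"
    unfolding L by (simp add: exp_add[symmetric] algebra_simps)
  also have "\<dots> = complex_of_real (w powr a) * (complex_of_real (cos (pi * a / 2)) + \<i> * complex_of_real (sin (pi * a / 2)))"
  proof -
    have e1: "exp (complex_of_real (a * ln w)) = complex_of_real (w powr a)"
      using w by (simp only: exp_of_real) (simp add: powr_def mult.commute)
    have e2: "exp (\<i> * complex_of_real (pi * a / 2)) = complex_of_real (cos (pi * a / 2)) + \<i> * complex_of_real (sin (pi * a / 2))"
      by (simp only: exp_Euler cos_of_real sin_of_real)
    show ?thesis by (simp only: e1 e2)
  qed
  finally show ?thesis .
qed
lemma alg:
  fixes A P l q x0 :: complex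
  assumes a: "A \<noteq> 0" "P \<noteq> 0" "A - l \<noteq> 0" "P - q \<noteq> 0"
  shows "(x0/(P*((A-l)/A)) + 1/(A*((A-l)/A)) * (1/(P*((P-q)/P)))) * ((A - l)*(P - q)) - (x0 * (A/P) * (P - q) + 1) = 0"
proof -
  have e1: "x0/(P*((A-l)/A)) = x0 * A / (P * (A - l))" using a by simp
  have e2: "1/(A*((A-l)/A)) = 1 / (A - l)" using a by simp
  have e3: "1/(P*((P-q)/P)) = 1 / (P - q)" using a by simp
  have "(x0 * A / (P * (A - l)) + 1 / (A - l) * (1 / (P - q))) * ((A - l)*(P - q)) = x0 * (A/P) * (P - q) + 1"
    using a by (simp add: divide_simps)
  then show ?thesis unfolding e1 e2 e3 by simp
qed

theorem mainTheorem9: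
  fixes \<alpha> r :: real and x0 :: complex
  assumes "0 < \<alpha>" and "\<alpha> < 1" and "0 < r"
  defines "lam \<equiv> complex_of_real r * (complex_of_real (cos (pi * \<alpha> / 2)) + \<i> * complex_of_real (sin (pi * \<alpha> / 2)))"
  shows "\<not> bounded ((\<lambda>t. frac_sol \<alpha> lam (r powr (1 / \<alpha>)) x0 t) ` {0..})"
proof
  assume bd: "bounded ((\<lambda>t. frac_sol \<alpha> lam (r powr (1 / \<alpha>)) x0 t) ` {0..})"
  have a: "0 < \<alpha>" using assms(1) .
  have r: "0 < r" using assms(3) .
  define w where "w = r powr (1 / \<alpha>)"
  have w: "w > 0" using r by (simp add: w_def)
  have wa: "w powr \<alpha> = r" using r a by (simp add: w_def powr_powr)
  have lamw: "(\<i> * complex_of_real w) powr complex_of_real \<alpha> = lam"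
    using iw_powr[OF w, of \<alpha>] by (simp add: wa lam_def)
  have nlam: "norm lam = r"
  proof -
    have "lam = complex_of_real r * exp (\<i> * complex_of_real (pi * \<alpha> / 2))"
      by (simp only: lam_def exp_Euler cos_of_real sin_of_real)
    then show ?thesis using r by (simp add: norm_mult)
  qed
  have pl: "norm lam < p powr \<alpha>" if "p > w" for p
    using that w a powr_less_mono2[of \<alpha> w p] by (simp add: nlam wa)
  define G where "G = (\<lambda>u. complex_of_real (u powr (\<alpha> - 1)) * mittag_leffler \<alpha> \<alpha> (lam * complex_of_real (u powr \<alpha>)))"
  define H where "H = (\<lambda>s. exp (\<i> * complex_of_real (w * s)))"
  define E where "E = (\<lambda>t. mittag_leffler1 \<alpha> (lam * complex_of_real (t powr \<alpha>)))"
  define C where "C = (\<lambda>t. integral\<^sup>L lborel (\<lambda>s. indicator {0..t} s *\<^sub>R (G (t - s) * H s)))"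
  have Gm: "G \<in> borel_measurable borel" unfolding G_def
    by (intro borel_measurable_times measurable_compose[OF _ ml_measurable[OF a a]]) measurable
  have Hm: "H \<in> borel_measurable borel" unfolding H_def by measurable
  have Em: "E \<in> borel_measurable borel" unfolding E_def mittag_leffler1_def
    by (rule measurable_compose[OF _ ml_measurable[OF a zero_less_one]]) measurable
  have Hb: "norm (H s) \<le> 1" for s by (simp add: H_def)
  have Gi: "integrable lborel (\<lambda>u. indicator {0..} u *\<^sub>R (G u * of_real (exp (-p*u))))" if "p > w" for p
    unfolding G_def by (rule laplace_g(1)[OF a _ pl[OF that]]) (use that w in simp)
  have Hi: "integrable lborel (\<lambda>u. indicator {0..} u *\<^sub>R (H u * of_real (exp (-p*u))))" if "p > w" for p
    unfolding H_def by (rule laplace_h(1)[OF _ that]) (use w in simp)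
  have pp: "p > 0" if "p > w" for p using that w by simp
  have C_app: "integral\<^sup>L lborel (\<lambda>s. indicator {0..t} s *\<^sub>R (G (t - s) * H s)) = C t" for t
    by (simp add: C_def)
  note CL = convolution_laplace[OF pp Gm Hm Hb Gi Hi, unfolded C_app, folded C_def]
  have w1: "w + 1 > w" by simp
  have phi_eq: "frac_sol \<alpha> lam w x0 t = E t * x0 + C t" for t
  proof (cases "t \<ge> 0")
    case True
    have si: "set_integrable lborel {0..t} (\<lambda>s. G (t - s) * H s)"
      unfolding set_integrable_def using CL(3)[OF w1 w1 w1 True] .
    have "integral {0..t} (\<lambda>s. G (t - s) * H s) = C t"
      using set_borel_integral_eq_integral(2)[OF si] by (simp add: C_def set_lebesgue_integral_def)
    then show ?thesis by (simp add: frac_sol_def E_def G_def H_def)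
  next
    case False
    then have e: "{0..t} = {}" by auto
    have "C t = 0" by (simp add: C_def e)
    then show ?thesis using e by (simp add: frac_sol_def E_def)
  qed
  define \<phi> where "\<phi> = (\<lambda>t. E t * x0 + C t)"
  have \<phi>m: "\<phi> \<in> borel_measurable borel" unfolding \<phi>_def using Em CL(4)[OF w1 w1 w1] by measurable
  obtain M where M: "\<And>t. t \<ge> 0 \<Longrightarrow> norm (\<phi> t) \<le> M"
  proof -
    from bd obtain B where "\<forall>x\<in>(\<lambda>t. frac_sol \<alpha> lam (r powr (1 / \<alpha>)) x0 t) ` {0..}. norm x \<le> B"
      unfolding bounded_iff by blast
    then have "norm (\<phi> t) \<le> B" if "t \<ge> 0" for t using that by (auto simp: \<phi>_def phi_eq[symmetric] w_def)
    then show ?thesis using that by blast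
  qed
  have M0: "M \<ge> 0" using M[of 0] norm_ge_zero[of "\<phi> 0"] by linarith
  define \<Phi> where "\<Phi> = (\<lambda>s. LINT t|lborel. indicator {0..} t *\<^sub>R (\<phi> t * exp (- (s * of_real t))))"
  have hol: "\<Phi> holomorphic_on {s. Re s > 0}"
    unfolding \<Phi>_def by (rule lap_holomorphic[OF \<phi>m M])
  have bnd\<Phi>: "norm (\<Phi> s) \<le> M / Re s" if "Re s > 0" for s
    unfolding \<Phi>_def by (rule lap_basic(2)[OF \<phi>m M that])
  define Pf where "Pf = (\<lambda>s. x0 * s powr complex_of_real (\<alpha> - 1) * (s - \<i> * complex_of_real w) + 1)"
  define Gf where "Gf = (\<lambda>s. \<Phi> s * ((s powr complex_of_real \<alpha> - lam) * (s - \<i> * complex_of_real w)) - Pf s)"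
  have real_val: "Gf (complex_of_real p) = 0" if p: "p > w" for p
  proof -
    have p0: "p > 0" using p w by simp
    have ex: "exp (- (complex_of_real p * complex_of_real t)) = complex_of_real (exp (-p*t))" for t
      by (simp add: exp_of_real[symmetric])
    have I1: "integrable lborel (\<lambda>t. indicator {0..} t *\<^sub>R (E t * complex_of_real (exp (-p*t))))"
      unfolding E_def by (rule laplace_E1(1)[OF a p0 pl[OF p]])
    have V1: "(LINT t|lborel. indicator {0..} t *\<^sub>R (E t * complex_of_real (exp (-p*t)))) = 1 / (complex_of_real p * (1 - lam / complex_of_real (p powr \<alpha>)))"
      unfolding E_def by (rule laplace_E1(2)[OF a p0 pl[OF p]])
    have VG: "(LINT t|lborel. indicator {0..} t *\<^sub>R (G t * complex_of_real (exp (-p*t)))) = 1 / (complex_of_real (p powr \<alpha>) * (1 - lam / complex_of_real (p powr \<alpha>)))"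
      unfolding G_def by (rule laplace_g(2)[OF a p0 pl[OF p]])
    have VH: "(LINT t|lborel. indicator {0..} t *\<^sub>R (H t * complex_of_real (exp (-p*t)))) = 1 / (complex_of_real p * (1 - \<i> * complex_of_real w / complex_of_real p))"
      unfolding H_def by (rule laplace_h(2)[OF _ p]) (use w in simp)
    have "\<Phi> (complex_of_real p) = (LINT t|lborel. indicator {0..} t *\<^sub>R (E t * complex_of_real (exp (-p*t))) * x0 + indicator {0..} t *\<^sub>R (C t * complex_of_real (exp (-p*t))))"
      unfolding \<Phi>_def \<phi>_def ex by (intro Bochner_Integration.integral_cong refl) (simp add: algebra_simps)
    also have "\<dots> = (LINT t|lborel. indicator {0..} t *\<^sub>R (E t * complex_of_real (exp (-p*t)))) * x0 + (LINT t|lborel. indicator {0..} t *\<^sub>R (C t * complex_of_real (exp (-p*t))))"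
    proof -
      have i1: "integrable lborel (\<lambda>t. indicator {0..} t *\<^sub>R (E t * complex_of_real (exp (-p*t))) * x0)"
        using I1 by (rule integrable_mult_left)
      show ?thesis
        by (subst Bochner_Integration.integral_add[OF i1 CL(1)[OF p p p]]) (simp only: integral_mult_left_zero)
    qed
    also have "\<dots> = x0 / (complex_of_real p * (1 - lam / complex_of_real (p powr \<alpha>)))
        + 1 / (complex_of_real (p powr \<alpha>) * (1 - lam / complex_of_real (p powr \<alpha>))) * (1 / (complex_of_real p * (1 - \<i> * complex_of_real w / complex_of_real p)))"
      by (simp only: V1 CL(2)[OF p p p] VG VH) simp
    finally have Pv: "\<Phi> (complex_of_real p) = \<dots>" .
    have A0: "complex_of_real (p powr \<alpha>) - lam \<noteq> 0"
    proof
      assume "complex_of_real (p powr \<alpha>) - lam = 0"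
      then have "lam = complex_of_real (p powr \<alpha>)" by simp
      then have "norm lam = p powr \<alpha>" by simp
      then show False using pl[OF p] by simp
    qed
    have B0: "complex_of_real p - \<i> * complex_of_real w \<noteq> 0"
    proof
      assume "complex_of_real p - \<i> * complex_of_real w = 0"
      then have "Re (complex_of_real p - \<i> * complex_of_real w) = 0" by simp
      then show False using p0 by simp
    qed
    have P0: "complex_of_real p \<noteq> 0" "complex_of_real (p powr \<alpha>) \<noteq> 0" using p0 by auto
    have pw1: "complex_of_real p powr complex_of_real \<alpha> = complex_of_real (p powr \<alpha>)"
      using p0 by (simp add: powr_of_real)
    have pw2: "complex_of_real p powr complex_of_real (\<alpha> - 1) = complex_of_real (p powr \<alpha>) / complex_of_real p"
      using p0 by (simp add: powr_of_real powr_diff)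
    have A1: "1 - lam / complex_of_real (p powr \<alpha>) = (complex_of_real (p powr \<alpha>) - lam) / complex_of_real (p powr \<alpha>)"
      using P0 by (simp add: field_simps)
    have B1: "1 - \<i> * complex_of_real w / complex_of_real p = (complex_of_real p - \<i> * complex_of_real w) / complex_of_real p"
      using P0 by (simp add: field_simps)
    show ?thesis unfolding Gf_def Pf_def Pv pw1 pw2 A1 B1
      by (rule alg[OF P0(2) P0(1) A0 B0])
  qed
  define S where "S = {s::complex. Re s > 0}"
  have Sopen: "open S" by (simp add: S_def open_halfspace_Re_gt)
  have Sconn: "connected S" unfolding S_def by (rule convex_connected[OF convex_halfspace_Re_gt])
  have nonpos: "s \<notin> \<real>\<^sub>\<le>\<^sub>0" if "s \<in> S" for s using that by (auto simp: S_def complex_nonpos_Reals_iff)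
  have hp1: "(\<lambda>s. s powr complex_of_real \<alpha>) holomorphic_on S"
    by (rule holomorphic_on_powr) (use nonpos in \<open>auto intro: holomorphic_intros\<close>)
  have hp2: "(\<lambda>s. s powr complex_of_real (\<alpha> - 1)) holomorphic_on S"
    by (rule holomorphic_on_powr) (use nonpos in \<open>auto intro: holomorphic_intros\<close>)
  have holS: "\<Phi> holomorphic_on S" using hol by (simp add: S_def)
  have holG: "Gf holomorphic_on S"
    unfolding Gf_def Pf_def by (intro holomorphic_intros holS hp1 hp2)
  define U where "U = complex_of_real ` {w<..}"
  have US: "U \<subseteq> S" using w by (auto simp: U_def S_def)
  have xiS: "complex_of_real (w + 1) \<in> S" using w by (simp add: S_def)
  have xiU: "complex_of_real (w + 1) islimpt U"
    unfolding islimpt_approachable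
  proof (intro allI impI)
    fix e :: real assume e: "e > 0"
    show "\<exists>x'\<in>U. x' \<noteq> complex_of_real (w + 1) \<and> dist x' (complex_of_real (w + 1)) < e"
    proof (intro bexI conjI)
      have "w + 1 + min 1 (e/2) \<in> {w<..}" using e by simp
      then show "complex_of_real (w + 1 + min 1 (e/2)) \<in> U" unfolding U_def by (rule imageI)
      show "complex_of_real (w + 1 + min 1 (e/2)) \<noteq> complex_of_real (w + 1)" using e by simp
      show "dist (complex_of_real (w + 1 + min 1 (e/2))) (complex_of_real (w + 1)) < e"
        using e by (simp add: dist_norm)
    qed
  qed
  have G0: "Gf z = 0" if "z \<in> U" for z using that real_val by (auto simp: U_def)
  have Gall: "Gf s = 0" if "s \<in> S" for s
    by (rule analytic_continuation[OF holG Sopen Sconn US xiS xiU G0 that])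
  define sq where "sq = (\<lambda>e::real. complex_of_real e + \<i> * complex_of_real w)"
  define iw where "iw = \<i> * complex_of_real w"
  have iwnp: "iw \<notin> \<real>\<^sub>\<le>\<^sub>0" using w by (simp add: iw_def complex_nonpos_Reals_iff)
  have key': "norm (Pf (sq e)) \<le> M * norm (sq e powr complex_of_real \<alpha> - lam)" if e0: "e > 0" for e
  proof -
    have "sq e \<in> S" using e0 by (simp add: S_def sq_def)
    then have "Gf (sq e) = 0" by (rule Gall)
    then have "Pf (sq e) = \<Phi> (sq e) * ((sq e powr complex_of_real \<alpha> - lam) * complex_of_real e)"
      by (simp add: Gf_def sq_def)
    then have "norm (Pf (sq e)) = norm (\<Phi> (sq e)) * norm (sq e powr complex_of_real \<alpha> - lam) * e"
      using e0 by (simp add: norm_mult)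
    also have "\<dots> \<le> (M / e) * norm (sq e powr complex_of_real \<alpha> - lam) * e"
      using bnd\<Phi>[of "sq e"] e0 by (intro mult_right_mono) (auto simp: sq_def)
    also have "\<dots> = M * norm (sq e powr complex_of_real \<alpha> - lam)" using e0 by simp
    finally show "norm (Pf (sq e)) \<le> M * norm (sq e powr complex_of_real \<alpha> - lam)" .
  qed
  have key: "eventually (\<lambda>e. norm (Pf (sq e)) \<le> M * norm (sq e powr complex_of_real \<alpha> - lam)) (at_right 0)"
    using key' by (auto simp: eventually_at_right_field intro!: exI[of _ 1])
  have slim: "(sq \<longlongrightarrow> iw) (at_right 0)"
  proof -
    have "((\<lambda>e::real. complex_of_real e + \<i> * complex_of_real w) \<longlongrightarrow> complex_of_real 0 + \<i> * complex_of_real w) (at_right 0)"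
      by (intro tendsto_intros)
    then show ?thesis by (simp add: sq_def iw_def)
  qed
  have c1: "isCont (\<lambda>s. s powr complex_of_real \<alpha>) iw"
    by (rule isCont_powr_complex) (use iwnp in auto)
  have c2: "isCont (\<lambda>s. s powr complex_of_real (\<alpha> - 1)) iw"
    by (rule isCont_powr_complex) (use iwnp in auto)
  have cP: "isCont Pf iw" unfolding Pf_def by (intro continuous_intros c2)
  have lim1: "((\<lambda>e. norm (Pf (sq e))) \<longlongrightarrow> 1) (at_right 0)"
  proof -
    have "((\<lambda>e. Pf (sq e)) \<longlongrightarrow> Pf iw) (at_right 0)" by (rule isCont_tendsto_compose[OF cP slim])
    moreover have "Pf iw = 1" by (simp add: Pf_def iw_def)
    ultimately show ?thesis using tendsto_norm by fastforce
  qed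
  have lim2: "((\<lambda>e. M * norm (sq e powr complex_of_real \<alpha> - lam)) \<longlongrightarrow> 0) (at_right 0)"
  proof -
    have "((\<lambda>e. sq e powr complex_of_real \<alpha>) \<longlongrightarrow> iw powr complex_of_real \<alpha>) (at_right 0)"
      by (rule isCont_tendsto_compose[OF c1 slim])
    then have "((\<lambda>e. sq e powr complex_of_real \<alpha>) \<longlongrightarrow> lam) (at_right 0)" by (simp add: iw_def lamw)
    then have "((\<lambda>e. sq e powr complex_of_real \<alpha> - lam) \<longlongrightarrow> 0) (at_right 0)"
      by (simp add: LIM_zero)
    then have "((\<lambda>e. norm (sq e powr complex_of_real \<alpha> - lam)) \<longlongrightarrow> 0) (at_right 0)"
      by (simp add: tendsto_norm_zero)
    then show ?thesis using tendsto_mult_right_zero by blast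
  qed
  have "1 \<le> (0::real)"
    by (rule tendsto_le[OF trivial_limit_at_right_real lim2 lim1 key])
  then show False by simp
qed

end
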